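(* Let $\varphi(z)=\sum_{n=0}^{\infty}a_nz^n$ be of the form $\varphi(z)=\exp(az^2)P(z)$, where $a<0$ and $P$ is a hyperbolic polynomial (a real polynomial all of whose zeros are real). Then $0<\limsup_{n\to\infty} n|a_n|^{2/n}<\infty$, and there exists $n_0\in\mathbb{N}$ such that $a_{n-1}a_{n+1}\le 0$ for every $n>n_0$. *)

theory Defs
  imports "HOL-Analysis.Analysis" "HOL-Computational_Algebra.Polynomial"
begin

text \<open>A real polynomial is hyperbolic if all of its complex zeros are real.
  (The zero polynomial vanishes everywhere, hence is not hyperbolic.)\<close>
definition hyperbolic_poly :: "real poly \<Rightarrow> bool" where
  "hyperbolic_poly P \<longleftrightarrow> (\<forall>z::complex. poly (map_poly complex_of_real P) z = 0 \<longrightarrow> z \<in> \<real>)"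

end

theory Submission imports Defs begin

definition ecoef :: "real \<Rightarrow> nat \<Rightarrow> real" where
  "ecoef a k = (if even k then a^(k div 2) / fact (k div 2) else 0)"

lemma exp_series:
  "(\<lambda>n. complex_of_real (ecoef a n) * z^n) sums exp (complex_of_real a * z^2)"
proof -
  have 1: "(\<lambda>k. (complex_of_real a * z^2)^k /\<^sub>R fact k) sums exp (complex_of_real a * z^2)"
    by (rule exp_converges)
  have sm: "strict_mono (\<lambda>k::nat. 2*k)" by (auto simp: strict_mono_def)
  have 2: "(\<lambda>n. complex_of_real (ecoef a n) * z^n) sums exp (complex_of_real a * z^2)
      \<longleftrightarrow> (\<lambda>k. complex_of_real (ecoef a (2*k)) * z^(2*k)) sums exp (complex_of_real a * z^2)"
    by (rule sums_mono_reindex[OF sm, symmetric]) (auto simp: ecoef_def elim!: evenE)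
  have 3: "complex_of_real (ecoef a (2*k)) * z^(2*k) = (complex_of_real a * z^2)^k /\<^sub>R fact k" for k
    by (simp add: ecoef_def scaleR_conv_of_real power_mult_distrib power_mult field_simps flip: power_mult[of z 2 k])
  show ?thesis using 1 2 3 by simp
qed

lemma shift_series:
  "(\<lambda>n. complex_of_real (if j \<le> n then ecoef a (n-j) else 0) * z^n) sums (z^j * exp (complex_of_real a * z^2))"
proof -
  have 1: "(\<lambda>i. z^j * (complex_of_real (ecoef a i) * z^i)) sums (z^j * exp (complex_of_real a * z^2))"
    by (rule sums_mult[OF exp_series])
  have "(\<lambda>i. (\<lambda>n. complex_of_real (if j \<le> n then ecoef a (n-j) else 0) * z^n) (i+j)) sums (z^j * exp (complex_of_real a * z^2))"
    using 1 by (simp add: power_add mult_ac)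
  then show ?thesis by (subst (asm) sums_zero_iff_shift) auto
qed

lemma powser_unique0:
  fixes b :: "nat \<Rightarrow> complex"
  assumes "\<And>z. (\<lambda>n. b n * z^n) sums 0"
  shows "b n = 0"
proof (induction n rule: less_induct)
  case (less n)
  have "(\<lambda>i. b (i+n) * z^i) sums 0" if "z \<noteq> 0" for z
  proof -
    have "(\<lambda>i. b (i+n) * z^(i+n)) sums 0"
      using assms[of z] by (subst sums_zero_iff_shift) (auto simp: less)
    from sums_divide[OF this, of "z^n"] show ?thesis
      using that by (simp add: power_add field_simps)
  qed
  then have "((\<lambda>_. 0) \<longlongrightarrow> b (0+n)) (at (0::complex))"
    by (intro powser_limit_0_strong[of 1]) auto
  then show ?case using LIM_const_eq by fastforce
qed


lemma mm_le: "real m ^ m \<le> exp (real m) * fact m"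
proof -
  have s: "(\<lambda>k. real m ^ k / fact k) sums exp (real m)"
    using exp_converges[of "real m"] by (simp add: divide_inverse mult.commute)
  have "sum (\<lambda>k. real m ^ k / fact k) {m} \<le> exp (real m)"
    using sum_le_suminf[OF sums_summable[OF s], of "{m}"] sums_unique[OF s] by auto
  then show ?thesis by (simp add: field_simps)
qed

lemma ln_fact_lower: "real m * ln (real m) - real m \<le> ln (fact m)"
proof (cases "m = 0")
  case True then show ?thesis by simp
next
  case False
  have "ln (real m ^ m) \<le> ln (exp (real m) * fact m)"
    using mm_le[of m] False by (subst ln_le_cancel_iff) auto
  then show ?thesis using False by (simp add: ln_realpow ln_mult)
qed

lemma ln_fact_upper: "ln (fact m) \<le> real m * ln (real m)"
proof (cases "m = 0")
  case True then show ?thesis by simp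
next
  case False
  have "ln (fact m) \<le> ln (real m ^ m)"
    using fact_le_power[of m, where 'a=real] False by (subst ln_le_cancel_iff) auto
  then show ?thesis using False by (simp add: ln_realpow)
qed

lemma core:
  fixes c T :: "nat \<Rightarrow> real" and a p :: real and J :: nat
  assumes a: "a < 0" and p: "p \<noteq> 0" and T: "T \<longlonglongrightarrow> p"
    and cT: "\<And>m. c (J + 2*m) = a^m / fact m * T m"
  shows "\<exists>M. \<forall>m\<ge>M. c (J+2*m) * c (J + 2*(m+1)) \<le> 0"
    and "\<exists>M L U. 0 < L \<and> (\<forall>m\<ge>M. L \<le> real (J+2*m) * \<bar>c (J+2*m)\<bar> powr (2 / real (J+2*m))
            \<and> real (J+2*m) * \<bar>c (J+2*m)\<bar> powr (2 / real (J+2*m)) \<le> U)"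
proof -
  obtain M0 where M0: "\<And>m. m \<ge> M0 \<Longrightarrow> \<bar>T m - p\<bar> < \<bar>p\<bar>/2"
    using LIMSEQ_D[OF T, of "\<bar>p\<bar>/2"] p by auto
  have Tpos: "T m * p > 0" if "m \<ge> M0" for m
  proof -
    have "\<bar>T m - p\<bar> < \<bar>p\<bar>/2" using M0 that by auto
    then show ?thesis using p
      by (cases "p > 0") (auto simp: abs_if split: if_splits intro: mult_pos_pos mult_neg_neg)
  qed
  have Tlow: "\<bar>p\<bar>/2 \<le> \<bar>T m\<bar>" and Tup: "\<bar>T m\<bar> \<le> 2*\<bar>p\<bar>" if "m \<ge> M0" for m
    using M0[OF that] by (auto simp: abs_if split: if_splits)
  show "\<exists>M. \<forall>m\<ge>M. c (J+2*m) * c (J + 2*(m+1)) \<le> 0"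
  proof (intro exI allI impI)
    fix m assume m: "m \<ge> M0"
    have "T m * T (m+1) > 0"
    proof -
      have "(T m * p) * (T (m+1) * p) > 0" using Tpos[of m] Tpos[of "m+1"] m by auto
      then have "(T m * T (m+1)) * (p*p) > 0" by (simp add: mult_ac)
      then show ?thesis using p by (simp add: zero_less_mult_iff)
    qed
    moreover have "c (J+2*m) * c (J + 2*(m+1)) = a * (a^m)^2 / (fact m * fact (m+1)) * (T m * T (m+1))"
      unfolding cT[of m] cT[of "m+1"] by (simp add: power2_eq_square field_simps)
    moreover have "a * (a^m)^2 / (fact m * fact (m+1)) \<le> 0"
      using a by (intro divide_nonpos_pos mult_nonpos_nonneg) auto
    ultimately show "c (J+2*m) * c (J + 2*(m+1)) \<le> 0"
      by (metis less_imp_le mult_nonpos_nonneg)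
  qed
  define \<alpha> where "\<alpha> = \<bar>a\<bar>"
  have \<alpha>: "\<alpha> > 0" using a by (simp add: \<alpha>_def)
  define L where "L = exp (- \<bar>ln (\<bar>p\<bar>/2)\<bar> - \<bar>ln \<alpha>\<bar>)"
  define U where "U = exp (ln (real J + 2) + real J + \<bar>ln \<alpha>\<bar> + 1 + \<bar>ln (2*\<bar>p\<bar>)\<bar>)"
  show "\<exists>M L U. 0 < L \<and> (\<forall>m\<ge>M. L \<le> real (J+2*m) * \<bar>c (J+2*m)\<bar> powr (2 / real (J+2*m))
            \<and> real (J+2*m) * \<bar>c (J+2*m)\<bar> powr (2 / real (J+2*m)) \<le> U)"
  proof (intro exI conjI allI impI)
    show "0 < L" by (simp add: L_def)
    fix m assume m: "m \<ge> max M0 1"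
    define n where "n = J + 2*m"
    define x where "x = \<bar>c n\<bar>"
    have m1: "real m \<ge> 1" using m by auto
    have mM0: "m \<ge> M0" using m by auto
    have n: "real n = real J + 2 * real m" by (simp add: n_def)
    have x: "x = \<alpha>^m / fact m * \<bar>T m\<bar>"
      by (simp add: x_def n_def cT \<alpha>_def abs_mult power_abs)
    have Tm0: "\<bar>T m\<bar> > 0" using Tlow[OF mM0] p by linarith
    have xpos: "x > 0" using x \<alpha> Tm0 by simp
    have lnx: "ln x = real m * ln \<alpha> - ln (fact m) + ln \<bar>T m\<bar>"
      using \<alpha> Tm0 by (simp add: x ln_mult ln_div ln_realpow)
    define E where "E = ln (real n) + (2 / real n) * ln x"
    have fE: "real n * x powr (2 / real n) = exp E"
      using xpos m1 by (simp add: E_def powr_def exp_add n)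
    define t where "t = 2 * real m / real n"
    define s where "s = 2 / real n"
    have t01: "0 < t" "t \<le> 1" using m1 by (auto simp: t_def n)
    have s01: "0 < s" "s \<le> 1" using m1 by (auto simp: s_def n)
    have lnm: "ln (real m) \<ge> 0" using m1 by simp
    have abs1: "\<bar>t * ln \<alpha>\<bar> \<le> \<bar>ln \<alpha>\<bar>"
      using t01 by (simp add: abs_mult mult_left_le_one_le)
    have E: "E = ln (real n) + t * ln \<alpha> - s * ln (fact m) + s * ln \<bar>T m\<bar>"
      by (simp add: E_def lnx t_def s_def algebra_simps add_divide_distrib diff_divide_distrib)
    have lnn_m: "ln (real n) - ln (real m) \<ge> 0" using m1 by (simp add: n)
    have lnn_m2: "ln (real n) - ln (real m) \<le> ln (real J + 2)"
    proof -
      have "real J * 1 \<le> real J * real m" using m1 by (intro mult_left_mono) auto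
      then have "real n \<le> (real J + 2) * real m" using m1 by (simp add: n algebra_simps)
      then have "ln (real n) \<le> ln ((real J + 2) * real m)" using m1 by (simp add: n)
      then show ?thesis using m1 by (simp add: ln_mult)
    qed
    have sm: "s * real m = t" by (simp add: s_def t_def)
    have key: "ln (real m) - t * ln (real m) \<le> real J"
    proof -
      have "ln (real m) - t * ln (real m) = real J / real n * ln (real m)"
        using m1 by (simp add: t_def n field_simps)
      also have "\<dots> \<le> real J / real n * real n"
        using m1 ln_le_minus_one[of "real m"] by (intro mult_left_mono) (auto simp: n)
      also have "\<dots> = real J" using m1 by (simp add: n)
      finally show ?thesis .
    qed
    show "L \<le> real (J+2*m) * \<bar>c (J+2*m)\<bar> powr (2 / real (J+2*m))"
    proof -
      have "s * ln (fact m) \<le> s * (real m * ln (real m))"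
        using ln_fact_upper[of m] s01 by (intro mult_left_mono) auto
      then have 1: "s * ln (fact m) \<le> t * ln (real m)"
        by (simp add: sm[symmetric] mult.assoc)
      have 2: "s * ln \<bar>T m\<bar> \<ge> s * ln (\<bar>p\<bar>/2)"
        using Tlow[OF mM0] s01 p by (intro mult_left_mono) auto
      have 3: "\<bar>s * ln (\<bar>p\<bar>/2)\<bar> \<le> \<bar>ln (\<bar>p\<bar>/2)\<bar>"
        using s01 by (simp add: abs_mult mult_left_le_one_le)
      have 4: "t * ln (real m) \<le> ln (real m)" using t01 lnm by (simp add: mult_left_le_one_le)
      have "E \<ge> - \<bar>ln (\<bar>p\<bar>/2)\<bar> - \<bar>ln \<alpha>\<bar>"
        using E 1 2 3 4 abs1 lnn_m by linarith
      then have "L \<le> exp E" by (simp add: L_def)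
      then show ?thesis using fE by (simp add: n_def x_def)
    qed
    show "real (J+2*m) * \<bar>c (J+2*m)\<bar> powr (2 / real (J+2*m)) \<le> U"
    proof -
      have "s * ln (fact m) \<ge> s * (real m * ln (real m) - real m)"
        using ln_fact_lower[of m] s01 by (intro mult_left_mono) auto
      then have 1: "s * ln (fact m) \<ge> t * ln (real m) - t"
        by (simp add: sm[symmetric] right_diff_distrib mult.assoc)
      have 2: "s * ln \<bar>T m\<bar> \<le> s * ln (2*\<bar>p\<bar>)"
        using Tup[OF mM0] s01 Tm0 by (intro mult_left_mono) auto
      have 3: "\<bar>s * ln (2*\<bar>p\<bar>)\<bar> \<le> \<bar>ln (2*\<bar>p\<bar>)\<bar>"
        using s01 by (simp add: abs_mult mult_left_le_one_le)
      have "E \<le> ln (real J + 2) + real J + \<bar>ln \<alpha>\<bar> + 1 + \<bar>ln (2*\<bar>p\<bar>)\<bar>"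
        using E 1 2 3 abs1 lnn_m2 key t01 by linarith
      then have "exp E \<le> U" by (simp add: U_def)
      then show ?thesis using fE by (simp add: n_def x_def)
    qed
  qed
qed


definition dcoef :: "real \<Rightarrow> real poly \<Rightarrow> nat \<Rightarrow> real" where
  "dcoef a P n = (\<Sum>j\<le>degree P. coeff P j * (if j \<le> n then ecoef a (n-j) else 0))"

lemma coeff_ident:
  assumes "\<And>z::complex. (\<lambda>n. complex_of_real (c n) * z ^ n) sums
           (exp (complex_of_real a * z\<^sup>2) * poly (map_poly complex_of_real P) z)"
  shows "c n = dcoef a P n"
proof -
  have pz: "poly (map_poly complex_of_real P) z = (\<Sum>j\<le>degree P. complex_of_real (coeff P j) * z^j)" for z
    by (simp add: poly_altdef degree_map_poly coeff_map_poly)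
  have ds: "(\<lambda>n. complex_of_real (dcoef a P n) * z^n) sums
           (exp (complex_of_real a * z\<^sup>2) * poly (map_poly complex_of_real P) z)" for z
  proof -
    have "(\<lambda>n. \<Sum>j\<le>degree P. complex_of_real (coeff P j) * (complex_of_real (if j \<le> n then ecoef a (n-j) else 0) * z^n))
        sums (\<Sum>j\<le>degree P. complex_of_real (coeff P j) * (z^j * exp (complex_of_real a * z^2)))"
      by (intro sums_sum sums_mult shift_series)
    then show ?thesis
      by (simp add: pz dcoef_def sum_distrib_left sum_distrib_right mult_ac)
  qed
  have "(\<lambda>n. complex_of_real (c n - dcoef a P n) * z^n) sums 0" for z
    using sums_diff[OF assms[of z] ds[of z]] by (simp add: algebra_simps)
  from powser_unique0[OF this, of n] show ?thesis by simp
qed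

lemma fact_ratio_lim:
  assumes "k \<ge> 1"
  shows "(\<lambda>m. fact m / fact (m+k) :: real) \<longlonglongrightarrow> 0"
proof (rule real_tendsto_sandwich[OF _ _ tendsto_const LIMSEQ_inverse_real_of_nat])
  show "\<forall>\<^sub>F m in sequentially. 0 \<le> fact m / (fact (m+k) :: real)"
    by (intro always_eventually allI divide_nonneg_nonneg) auto
  show "\<forall>\<^sub>F m in sequentially. fact m / fact (m+k) \<le> inverse (real (Suc m))"
  proof (intro always_eventually allI)
    fix m
    have "fact (Suc m) \<le> (fact (m+k) :: real)" using assms by (intro fact_mono) auto
    then have "real (Suc m) * fact m \<le> fact (m+k)" by simp
    then show "fact m / fact (m+k) \<le> inverse (real (Suc m))"
      by (simp add: field_simps)
  qed
qed

lemma T_lim: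
  fixes a :: real and P :: "real poly" and J :: nat
  assumes a: "a \<noteq> 0" and J: "coeff P J \<noteq> 0"
    and Jmax: "\<And>j. coeff P j \<noteq> 0 \<Longrightarrow> j mod 2 = J mod 2 \<Longrightarrow> j \<le> J"
  shows "(\<lambda>m. dcoef a P (J + 2*m) * fact m / a^m) \<longlonglongrightarrow> coeff P J"
proof -
  define g where "g j m = coeff P j * (if j \<le> J + 2*m then ecoef a (J+2*m-j) else 0) * fact m / a^m" for j m
  have eq: "dcoef a P (J + 2*m) * fact m / a^m = (\<Sum>j\<le>degree P. g j m)" for m
    by (simp add: dcoef_def g_def sum_distrib_right sum_divide_distrib)
  have lim: "g j \<longlonglongrightarrow> (if j = J then coeff P J else 0)" for j
  proof (cases "j = J")
    case True
    then have "g j m = coeff P J" for m using a by (simp add: g_def ecoef_def)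
    then have "g j = (\<lambda>_. coeff P J)" by auto
    then show ?thesis using True by simp
  next
    case False
    show ?thesis
    proof (cases "coeff P j = 0 \<or> j mod 2 \<noteq> J mod 2")
      case True
      have "g j m = 0" for m
      proof (cases "coeff P j = 0")
        case False
        with True have "j mod 2 \<noteq> J mod 2" by auto
        then have "j \<le> J + 2*m \<Longrightarrow> odd (J + 2*m - j)" by presburger
        then show ?thesis by (simp add: g_def ecoef_def)
      qed (simp add: g_def)
      then have "g j = (\<lambda>_. 0)" by auto
      then show ?thesis using False by simp
    next
      case nz: False
      then have jJ: "j < J" using Jmax[of j] False by auto
      define k where "k = (J - j) div 2"
      have par: "j mod 2 = J mod 2" using nz by auto
      have ev: "even (J - j)" using jJ par mod_eq_dvd_iff_nat[of j J 2] by simp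
      have e: "J - j = 2*k" unfolding k_def using ev by simp
      have k1: "J + 2*m - j = 2*(m+k)" for m using jJ e by arith
      have k2: "k \<ge> 1" using jJ e by arith
      note k = k1 k2
      have gj: "g j m = coeff P j * a^k * (fact m / fact (m+k))" for m
      proof -
        have "g j m = coeff P j * (a^(m+k)/fact(m+k)) * fact m / a^m"
          using jJ unfolding g_def k1 ecoef_def by simp
        then show ?thesis using a by (simp add: power_add field_simps)
      qed
      moreover have "(\<lambda>m. coeff P j * a^k * (fact m / fact (m+k) :: real)) \<longlonglongrightarrow> coeff P j * a^k * 0"
        by (intro tendsto_mult tendsto_const fact_ratio_lim k)
      moreover have "g j = (\<lambda>m. coeff P j * a^k * (fact m / fact (m+k)))" by (rule ext) (rule gj)
      ultimately have "g j \<longlonglongrightarrow> 0" by simp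
      then show ?thesis using False by simp
    qed
  qed
  have JD: "J \<le> degree P" using J le_degree by blast
  have "(\<lambda>m. \<Sum>j\<le>degree P. g j m) \<longlonglongrightarrow> (\<Sum>j\<le>degree P. if j = J then coeff P J else 0)"
    by (intro tendsto_sum lim)
  then show ?thesis using JD by (simp add: eq)
qed


lemma class_nonempty:
  fixes a :: real and P :: "real poly" and c :: "nat \<Rightarrow> real"
  assumes a: "a < 0" and cd: "\<And>n. c n = dcoef a P n" and j: "coeff P j \<noteq> 0"
  shows "\<exists>J M L U. J mod 2 = j mod 2 \<and> 0 < L \<and> (\<forall>m\<ge>M. c (J+2*m) * c (J + 2*(m+1)) \<le> 0
     \<and> L \<le> real (J+2*m) * \<bar>c (J+2*m)\<bar> powr (2 / real (J+2*m))
     \<and> real (J+2*m) * \<bar>c (J+2*m)\<bar> powr (2 / real (J+2*m)) \<le> U)"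
proof -
  define S where "S = {i. coeff P i \<noteq> 0 \<and> i mod 2 = j mod 2}"
  have fin: "finite S"
    by (rule finite_subset[of _ "{..degree P}"]) (auto simp: S_def le_degree)
  have jS: "j \<in> S" using j by (simp add: S_def)
  define J where "J = Max S"
  have JS: "J \<in> S" unfolding J_def using fin jS by (intro Max_in) auto
  have Jmax: "\<And>i. coeff P i \<noteq> 0 \<Longrightarrow> i mod 2 = J mod 2 \<Longrightarrow> i \<le> J"
    using JS fin by (auto simp: J_def S_def)
  have a0: "a \<noteq> 0" using a by simp
  define T where "T m = dcoef a P (J + 2*m) * fact m / a^m" for m
  have T: "T \<longlonglongrightarrow> coeff P J"
    unfolding T_def by (rule T_lim[OF a0 _ Jmax]) (use JS in \<open>auto simp: S_def\<close>)
  have cT: "c (J + 2*m) = a^m / fact m * T m" for m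
    using a0 by (simp add: T_def cd)
  have pJ: "coeff P J \<noteq> 0" using JS by (simp add: S_def)
  obtain M1 where M1: "\<forall>m\<ge>M1. c (J+2*m) * c (J + 2*(m+1)) \<le> 0"
    using core(1)[OF a pJ T cT] by blast
  obtain M2 L U where LU: "0 < L" "\<forall>m\<ge>M2. L \<le> real (J+2*m) * \<bar>c (J+2*m)\<bar> powr (2 / real (J+2*m))
            \<and> real (J+2*m) * \<bar>c (J+2*m)\<bar> powr (2 / real (J+2*m)) \<le> U"
    using core(2)[OF a pJ T cT] by blast
  show ?thesis
    apply (rule exI[of _ J], rule exI[of _ "max M1 M2"], rule exI[of _ L], rule exI[of _ U])
    using JS M1 LU by (auto simp: S_def)
qed

theorem theorem2:
  fixes a :: real and P :: "real poly" and c :: "nat \<Rightarrow> real"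
  assumes "a < 0"
    and "hyperbolic_poly P"
    and "\<And>z::complex. (\<lambda>n. complex_of_real (c n) * z ^ n) sums
           (exp (complex_of_real a * z\<^sup>2) * poly (map_poly complex_of_real P) z)"
  shows "0 < limsup (\<lambda>n. ereal (real n * \<bar>c n\<bar> powr (2 / real n)))
       \<and> limsup (\<lambda>n. ereal (real n * \<bar>c n\<bar> powr (2 / real n))) < \<infinity>
       \<and> (\<exists>n0::nat. \<forall>n>n0. c (n - 1) * c (n + 1) \<le> 0)"
proof -
  define f where "f n = real n * \<bar>c n\<bar> powr (2 / real n)" for n
  have cd: "c n = dcoef a P n" for n using coeff_ident[OF assms(3)] .
  have P0: "P \<noteq> 0"
  proof
    assume "P = 0"
    then have "poly (map_poly complex_of_real P) \<i> = 0" by simp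
    then have "\<i> \<in> \<real>" using assms(2) unfolding hyperbolic_poly_def by blast
    then show False by (simp add: complex_is_Real_iff)
  qed
  have cls: "\<exists>N U. \<forall>n\<ge>N. n mod 2 = q \<longrightarrow> c n * c (n+2) \<le> 0 \<and> f n \<le> U" for q
  proof (cases "\<exists>j. coeff P j \<noteq> 0 \<and> j mod 2 = q")
    case False
    have "c n = 0" if "n mod 2 = q" for n
      unfolding cd dcoef_def
    proof (intro sum.neutral ballI)
      fix j assume "j \<in> {..degree P}"
      show "coeff P j * (if j \<le> n then ecoef a (n - j) else 0) = 0"
      proof (cases "coeff P j = 0")
        case nz: False
        with False have "j mod 2 \<noteq> q" by auto
        then have "j \<le> n \<Longrightarrow> odd (n - j)" using that by presburger
        then show ?thesis by (simp add: ecoef_def)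
      qed simp
    qed
    then show ?thesis
      by (intro exI[of _ 0] exI[of _ 0]) (auto simp: f_def)
  next
    case True
    then obtain j where j: "coeff P j \<noteq> 0" "j mod 2 = q" by blast
    obtain J M L U where JM0: "J mod 2 = j mod 2" "0 < L" "\<forall>m\<ge>M. c (J+2*m) * c (J + 2*(m+1)) \<le> 0
     \<and> L \<le> real (J+2*m) * \<bar>c (J+2*m)\<bar> powr (2 / real (J+2*m))
     \<and> real (J+2*m) * \<bar>c (J+2*m)\<bar> powr (2 / real (J+2*m)) \<le> U"
      using class_nonempty[OF assms(1) cd j(1)] by blast
    have JM: "J mod 2 = q" "\<forall>m\<ge>M. c (J+2*m) * c (J + 2*(m+1)) \<le> 0
     \<and> L \<le> f (J+2*m) \<and> f (J+2*m) \<le> U"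
      using JM0 j(2) unfolding f_def by auto
    show ?thesis
    proof (intro exI[of _ "J + 2*M"] exI[of _ U] allI impI)
      fix n assume n: "n \<ge> J + 2*M" "n mod 2 = q"
      define m where "m = (n - J) div 2"
      have nJ0: "J \<le> n" using n(1) by simp
      have ev: "2 dvd (n - J)" using n(2) JM(1) mod_eq_dvd_iff_nat[OF nJ0, of 2] by simp
      have "n - J = 2*m" unfolding m_def using ev by simp
      then have nJ: "n = J + 2*m" using nJ0 by arith
      have mM: "m \<ge> M" using n(1) nJ by linarith
      have "n + 2 = J + 2*(m+1)" using nJ by simp
      then show "c n * c (n+2) \<le> 0 \<and> f n \<le> U" using JM(2) mM nJ by metis
    qed
  qed
  obtain N0 U0 where NU0: "\<forall>n\<ge>N0. n mod 2 = 0 \<longrightarrow> c n * c (n+2) \<le> 0 \<and> f n \<le> U0"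
    using cls[of 0] by blast
  obtain N1 U1 where NU1: "\<forall>n\<ge>N1. n mod 2 = 1 \<longrightarrow> c n * c (n+2) \<le> 0 \<and> f n \<le> U1"
    using cls[of 1] by blast
  have both: "c n * c (n+2) \<le> 0 \<and> f n \<le> max U0 U1" if "n \<ge> max N0 N1" for n
  proof (cases "n mod 2 = 0")
    case True then show ?thesis using NU0 that by fastforce
  next
    case False then have "n mod 2 = 1" by presburger
    then show ?thesis using NU1 that by fastforce
  qed
  have up: "limsup (\<lambda>n. ereal (f n)) \<le> ereal (max U0 U1)"
  proof (rule Limsup_bounded)
    show "\<forall>\<^sub>F n in sequentially. ereal (f n) \<le> ereal (max U0 U1)"
      unfolding eventually_sequentially
    proof (intro exI allI impI)
      fix n assume "n \<ge> max N0 N1"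
      then have "f n \<le> max U0 U1" using both by blast
      then show "ereal (f n) \<le> ereal (max U0 U1)" by (simp only: ereal_less_eq(3))
    qed
  qed
  have low: "0 < limsup (\<lambda>n. ereal (f n))"
  proof -
    obtain j where j: "coeff P j \<noteq> 0" using P0 leading_coeff_neq_0 by blast
    obtain J M L U where JM0: "J mod 2 = j mod 2" "0 < L" "\<forall>m\<ge>M. c (J+2*m) * c (J + 2*(m+1)) \<le> 0
     \<and> L \<le> real (J+2*m) * \<bar>c (J+2*m)\<bar> powr (2 / real (J+2*m))
     \<and> real (J+2*m) * \<bar>c (J+2*m)\<bar> powr (2 / real (J+2*m)) \<le> U"
      using class_nonempty[OF assms(1) cd j] by blast
    have JM: "0 < L" "\<forall>m\<ge>M. L \<le> f (J+2*m)"
      using JM0 unfolding f_def by auto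
    define r where "r k = J + 2*(k+M)" for k
    have sm: "strict_mono r" by (auto simp: strict_mono_def r_def)
    have "ereal L \<le> limsup ((\<lambda>n. ereal (f n)) \<circ> r)"
    proof (rule le_Limsup)
      show "\<forall>\<^sub>F k in sequentially. ereal L \<le> ((\<lambda>n. ereal (f n)) \<circ> r) k"
      proof (intro always_eventually allI)
        fix k
        have "L \<le> f (J + 2*(k+M))" using JM(2) le_add2 by blast
        then show "ereal L \<le> ((\<lambda>n. ereal (f n)) \<circ> r) k" by (simp add: r_def)
      qed
    qed simp
    also have "\<dots> \<le> limsup (\<lambda>n. ereal (f n))" by (rule limsup_subseq_mono[OF sm])
    finally have "ereal L \<le> limsup (\<lambda>n. ereal (f n))" .
    moreover have "(0::ereal) < ereal L" using JM(1) by simp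
    ultimately show ?thesis by (rule order_less_le_trans[rotated])
  qed
  have sign: "\<exists>n0::nat. \<forall>n>n0. c (n - 1) * c (n + 1) \<le> 0"
  proof (intro exI allI impI)
    fix n assume n: "n > max N0 N1 + 1"
    have "n - 1 + 2 = n + 1" using n by simp
    moreover have "n - 1 \<ge> max N0 N1" using n by (simp add: max_def split: if_splits)
    ultimately show "c (n - 1) * c (n + 1) \<le> 0" using both[of "n-1"] by metis
  qed
  have fin: "limsup (\<lambda>n. ereal (f n)) < \<infinity>"
  proof -
    have lt: "ereal V < \<infinity>" for V :: real by simp
    show ?thesis using up lt[of "max U0 U1"] by (rule order.strict_trans1)
  qed
  show ?thesis using fin low sign unfolding f_def by blast
qed

end
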